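(* With the icosahedral setting of the context, let $\omega>0$, $n\ge2$ and $y\in\mathcal{I}$. Then \[ w_n(x;y)=\sum_{j=0}^{\lfloor n/2\rfloor}\left(-\frac{\tau+2}{4\omega}\right)^j\frac{1}{(15\kappa+\tfrac32+n-2j)_j}\,\frac{\nu(n)}{\nu(n-2j)}\,L_j^{(15\kappa+1/2+n-2j)}\left(\omega|x|^2\right)\phi_{n-2j}(x;y). \]
   Context: Let $\tau=(1+\sqrt5)/2$. Vectors in $\mathbb{R}^3$ are row vectors; $\langle x,y\rangle=\sum x_iy_i$, $|x|^2=\langle x,x\rangle$. Let $\kappa\ge0$ be real. Let $\mathcal{I}=\{(0,\pm\tau,\pm1),(\pm1,0,\pm\tau),(\pm\tau,\pm1,0)\}$. For $y_0\in\mathcal{I}$, $q_n(x;y_0)$ are defined by $\left(1-r\langle x,y_0\rangle\right)^{-1}\prod_{y\in\mathcal{I}}\left(1-r\langle x,y\rangle\right)^{-\kappa}=\sum_{n\ge0}q_n(x;y_0)r^n$. $\nu(n)=2^n(6\kappa+1)_s(5\kappa+\tfrac12)_t$ with $s=\lfloor n/2\rfloor$, $t=\lfloor (n+1)/2\rfloor$, $(a)_k=a(a+1)\cdots(a+k-1)$. For $n\ge0$ define $w_n(x;y_0)=\sum_{j=0}^{\lfloor n/2\rfloor}(-1)^j\frac{(\tau+2)^j}{(4\omega)^jj!}\frac{\nu(n)}{\nu(n-2j)}q_{n-2j}(x;y_0)$ and $\phi_n(x;y_0)=\sum_{j=0}^{\lfloor n/2\rfloor}\frac{(\tau+2)^j|x|^{2j}}{4^jj!\,(-15\kappa-n+1/2)_j}\frac{\nu(n)}{\nu(n-2j)}q_{n-2j}(x;y_0)$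 (so $\phi_0=1$). The Laguerre polynomial is $L_m^{(\alpha)}(s)=\frac{(\alpha+1)_m}{m!}\sum_{j=0}^m\frac{(-m)_j}{(\alpha+1)_j}\frac{s^j}{j!}$. *)

theory Defs
  imports "HOL-Analysis.Analysis" "HOL-Computational_Algebra.Formal_Power_Series"
begin

definition tau :: real where "tau = (1 + sqrt 5) / 2"

definition icos :: "(real^3) set" where
  "icos = {vector [0, s * tau, t] | s t. s \<in> {-1, 1} \<and> t \<in> {-1, 1}}
        \<union> {vector [s, 0, t * tau] | s t. s \<in> {-1, 1} \<and> t \<in> {-1, 1}}
        \<union> {vector [s * tau, t, 0] | s t. s \<in> {-1, 1} \<and> t \<in> {-1, 1}}"

text \<open>Generating function (1 - r<x,y0>)^(-1) * prod_{y in I} (1 - r<x,y>)^(-kappa) as a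
  formal power series in r; (1 - b r)^(-kappa) is the binomial series (1+X)^(-kappa)
  composed with -b X.\<close>
definition qgen :: "real \<Rightarrow> real^3 \<Rightarrow> real^3 \<Rightarrow> real fps" where
  "qgen \<kappa> x y0 = inverse (1 - fps_const (x \<bullet> y0) * fps_X) *
     (\<Prod>y\<in>icos. fps_binomial (- \<kappa>) oo (fps_const (- (x \<bullet> y)) * fps_X))"

definition q :: "real \<Rightarrow> nat \<Rightarrow> real^3 \<Rightarrow> real^3 \<Rightarrow> real" where
  "q \<kappa> n x y0 = fps_nth (qgen \<kappa> x y0) n"

definition nu :: "real \<Rightarrow> nat \<Rightarrow> real" where
  "nu \<kappa> n = 2 ^ n * pochhammer (6 * \<kappa> + 1) (n div 2) * pochhammer (5 * \<kappa> + 1/2) ((n + 1) div 2)"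

definition w :: "real \<Rightarrow> real \<Rightarrow> nat \<Rightarrow> real^3 \<Rightarrow> real^3 \<Rightarrow> real" where
  "w \<kappa> \<omega> n x y0 = (\<Sum>j = 0..n div 2. (-1) ^ j * (tau + 2) ^ j / ((4 * \<omega>) ^ j * fact j)
       * (nu \<kappa> n / nu \<kappa> (n - 2 * j)) * q \<kappa> (n - 2 * j) x y0)"

definition phi :: "real \<Rightarrow> nat \<Rightarrow> real^3 \<Rightarrow> real^3 \<Rightarrow> real" where
  "phi \<kappa> n x y0 = (\<Sum>j = 0..n div 2. (tau + 2) ^ j * (norm x ^ 2) ^ j
       / (4 ^ j * fact j * pochhammer (- 15 * \<kappa> - real n + 1/2) j)
       * (nu \<kappa> n / nu \<kappa> (n - 2 * j)) * q \<kappa> (n - 2 * j) x y0)"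

definition laguerre :: "nat \<Rightarrow> real \<Rightarrow> real \<Rightarrow> real" where
  "laguerre m \<alpha> s = pochhammer (\<alpha> + 1) m / fact m *
     (\<Sum>j = 0..m. pochhammer (- real m) j / pochhammer (\<alpha> + 1) j * s ^ j / fact j)"

end

theory Submission
  imports Defs
begin

lemma poch_neg_nat:
  assumes "l \<le> j"
  shows "pochhammer (- real j) l = (-1)^l * fact j / fact (j - l)"
proof -
  have "real j gchoose l = (-1)^l * pochhammer (- real j) l / fact l"
    by (rule gbinomial_pochhammer)
  moreover have "real j gchoose l = fact j / (fact l * fact (j - l))"
    using assms by (simp add: binomial_gbinomial[symmetric] binomial_fact)
  ultimately have "(-1)^l * pochhammer (- real j) l / fact l = fact j / (fact l * fact (j - l))" by simp
  then show ?thesis by (cases "even l") (simp_all add: field_simps)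
qed

lemma lag_expand:
  assumes "\<alpha> > 0"
  shows "laguerre j \<alpha> s / pochhammer (\<alpha> + 1) j =
     (\<Sum>l=0..j. (-s)^l / (fact (j - l) * fact l * pochhammer (\<alpha> + 1) l))"
proof -
  have P: "pochhammer (\<alpha> + 1) j > 0" using assms by (intro pochhammer_pos) simp
  have "laguerre j \<alpha> s / pochhammer (\<alpha> + 1) j =
     (\<Sum>l=0..j. pochhammer (- real j) l / pochhammer (\<alpha> + 1) l * s ^ l / fact l) / fact j"
    unfolding laguerre_def using P by simp
  also have "\<dots> = (\<Sum>l=0..j. pochhammer (- real j) l / pochhammer (\<alpha> + 1) l * s ^ l / fact l / fact j)"
    by (simp add: sum_divide_distrib)
  also have "\<dots> = (\<Sum>l=0..j. (-s)^l / (fact (j - l) * fact l * pochhammer (\<alpha> + 1) l))"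
  proof (rule sum.cong)
    fix l assume "l \<in> {0..j}"
    then have "l \<le> j" by simp
    then show "pochhammer (- real j) l / pochhammer (\<alpha> + 1) l * s ^ l / fact l / fact j =
      (-s)^l / (fact (j - l) * fact l * pochhammer (\<alpha> + 1) l)"
    proof -
      have g: "\<And>e fj fd Q S fl::real. fj \<noteq> 0 \<Longrightarrow> e * fj / fd / Q * S / fl / fj = (e * S) / (fd * fl * Q)"
        by (simp add: divide_inverse inverse_mult_distrib mult_ac)
      show ?thesis unfolding poch_neg_nat[OF \<open>l \<le> j\<close>] power_minus[of s l]
        by (rule g) simp
    qed
  qed simp
  finally show ?thesis .
qed

lemma tri:
  fixes f :: "nat \<Rightarrow> nat \<Rightarrow> real"
  shows "(\<Sum>j=0..N. \<Sum>i=0..N-j. f j i) = (\<Sum>k=0..N. \<Sum>j=0..k. f j (k-j))"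
proof -
  have S: "{(j,i). j+i \<le> N} = Sigma {0..N} (\<lambda>j. {0..N-j})" by auto
  have "(\<Sum>j=0..N. \<Sum>i=0..N-j. f j i) = (\<Sum>(j,i)\<in>{(j,i). j+i \<le> N}. f j i)"
    unfolding S by (simp add: sum.Sigma)
  also have "\<dots> = (\<Sum>k\<le>N. \<Sum>j\<le>k. f j (k-j))" by (rule sum.triangle_reindex_eq)
  finally show ?thesis by (simp add: atLeast0AtMost)
qed

lemma summand_form:
  fixes \<gamma> :: real
  assumes "\<gamma> > 0" "p \<le> m"
  shows "1 / (fact p * fact (m-p) * pochhammer (1 - (\<gamma> + 2 * real p)) p * pochhammer (\<gamma> + 2 * real p + 1) (m-p))
    = (-1)^p * (\<gamma> + 2 * real p) / (fact p * fact (m-p) * pochhammer (\<gamma> + real p) (m+1))"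
proof -
  have A: "pochhammer (1 - (\<gamma> + 2 * real p)) p = (-1)^p * pochhammer (\<gamma> + real p) p"
    using pochhammer_minus[of "\<gamma> + 2 * real p - 1" p] by (simp add: algebra_simps)
  have B: "pochhammer (\<gamma> + real p) (m+1) = pochhammer (\<gamma> + real p) p * pochhammer (\<gamma> + 2 * real p) (Suc (m - p))"
    using pochhammer_product[of p "m+1" "\<gamma> + real p"] assms by (simp add: Suc_diff_le algebra_simps)
  have C: "pochhammer (\<gamma> + 2 * real p) (Suc (m - p)) = (\<gamma> + 2 * real p) * pochhammer (\<gamma> + 2 * real p + 1) (m - p)"
    by (simp add: pochhammer_rec)
  have p1: "pochhammer (\<gamma> + real p) p > 0" using assms by (intro pochhammer_pos) simp
  have p2: "pochhammer (\<gamma> + 2 * real p + 1) (m - p) > 0" using assms by (intro pochhammer_pos) simp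
  have g: "\<gamma> + 2 * real p > 0" using assms by simp
  have f1: "fact p > (0::real)" "fact (m-p) > (0::real)" by auto
  have key: "\<And>a b c d g e::real. a\<noteq>0 \<Longrightarrow> b\<noteq>0 \<Longrightarrow> c\<noteq>0 \<Longrightarrow> d\<noteq>0 \<Longrightarrow> g\<noteq>0 \<Longrightarrow> e=1 \<or> e=-1 \<Longrightarrow>
     1/(a*b*(e*c)*d) = e*g/(a*b*(c*(g*d)))"
    by (elim disjE) (simp_all add: field_simps)
  have e: "(-1::real)^p = 1 \<or> (-1::real)^p = -1" by (cases "even p") auto
  show ?thesis unfolding A B C using p1 p2 g f1 e
    by (intro key) auto
qed

lemma gen_id0:
  fixes F G P p r e A B S K :: real
  assumes "F\<noteq>0" "G\<noteq>0" "P\<noteq>0" "A\<noteq>0" "B\<noteq>0" "S\<noteq>0" "p+1\<noteq>0" "r+1\<noteq>0"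
    and h: "A*B + p*S = (r+1)*K"
  shows "e*K/(F*(A*G)*(B*(P*S))) =
    -((-e)*(p+1)/(((p+1)*F)*G*(P*S)) - e*p/(F*(A*G)*(B*P)))/(r+1)"
proof -
  have c1: "(-e)*(p+1)/(((p+1)*F)*G*(P*S)) = (-e)/(F*G*(P*S))" using assms by simp
  have "-((-e)*(p+1)/(((p+1)*F)*G*(P*S)) - e*p/(F*(A*G)*(B*P))) = e*(A*B + p*S)/(F*(A*G)*(B*(P*S)))"
    unfolding c1 using assms(1-8) by (simp add: field_simps)
  also have "\<dots> = e*((r+1)*K)/(F*(A*G)*(B*(P*S)))" by (simp add: h)
  finally have eq: "-((-e)*(p+1)/(((p+1)*F)*G*(P*S)) - e*p/(F*(A*G)*(B*P))) = e*((r+1)*K)/(F*(A*G)*(B*(P*S)))" .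
  have gg: "\<And>D. (e*((r+1)*K)/D)/(r+1) = e*K/D" using assms by simp
  show ?thesis by (subst eq) (rule gg[symmetric])
qed

lemma gen_id:
  fixes F G P g p r e :: real
  assumes "F\<noteq>0" "G\<noteq>0" "P\<noteq>0" "g+p\<noteq>0" "g+p+1+r\<noteq>0" "r-p+1\<noteq>0" "p+1\<noteq>0" "r+1\<noteq>0"
  shows "e*(g+2*p)/(F*((r-p+1)*G)*((g+p)*(P*(g+p+1+r)))) =
    -((-e)*(p+1)/(((p+1)*F)*G*(P*(g+p+1+r))) - e*p/(F*((r-p+1)*G)*((g+p)*P)))/(r+1)"
  by (rule gen_id0) (use assms in \<open>auto simp: algebra_simps\<close>)

lemma gen_id2:
  fixes K F X M e :: real
  assumes "K\<noteq>0" "F\<noteq>0" "X\<noteq>0" "M\<noteq>0"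
  shows "e*K/(F*1*(K*X)) = -(0 - e*M/(F*1*X))/M"
  using assms by (simp add: field_simps)

lemma tele:
  fixes \<gamma> :: real
  assumes "\<gamma> > 0" "m \<ge> 1"
  shows "(\<Sum>p=0..m. (-1)^p * (\<gamma> + 2 * real p) / (fact p * fact (m-p) * pochhammer (\<gamma> + real p) (m+1))) = 0"
proof -
  define H where "H p = (if p \<le> m then (-1)^p * real p / (fact p * fact (m-p) * pochhammer (\<gamma> + real p) m) else (0::real))" for p
  have T: "(-1)^p * (\<gamma> + 2 * real p) / (fact p * fact (m-p) * pochhammer (\<gamma> + real p) (m+1))
      = - (H (Suc p) - H p) / real m" if "p \<le> m" for p
  proof (cases "p = m")
    case True
    have P: "pochhammer (\<gamma> + real m) m > 0" using assms by (intro pochhammer_pos) simp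
    have X: "pochhammer (\<gamma> + real m) (m+1) = (\<gamma> + 2 * real m) * pochhammer (\<gamma> + real m) m"
      using pochhammer_rec'[of "\<gamma> + real m" m] by (simp add: algebra_simps)
    have HS: "H (Suc m) = 0" unfolding H_def by simp
    have Hm: "H m = (-1)^m * real m / (fact m * 1 * pochhammer (\<gamma> + real m) m)" unfolding H_def by simp
    have f0: "fact (m - m) = (1::real)" by simp
    show ?thesis unfolding True HS Hm X f0
      by (rule gen_id2) (use P assms in auto)
  next
    case False
    then have pm: "p < m" using that by simp
    obtain r where r: "m = Suc r" using assms by (cases m) auto
    have pr: "p \<le> r" using pm r by simp
    define P where "P = pochhammer (\<gamma> + real p + 1) r"
    have P0: "P > 0" unfolding P_def using assms by (intro pochhammer_pos) simp
    have e1: "pochhammer (\<gamma> + real p) m = (\<gamma> + real p) * P" unfolding P_def r by (simp add: pochhammer_rec)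
    have e2: "pochhammer (\<gamma> + real (Suc p)) m = P * (\<gamma> + real p + 1 + real r)"
      unfolding P_def r using pochhammer_rec'[of "\<gamma> + real p + 1" r] by (simp add: algebra_simps)
    have e3: "pochhammer (\<gamma> + real p) (m+1) = (\<gamma> + real p) * (P * (\<gamma> + real p + 1 + real r))"
      using e2 by (simp add: pochhammer_rec r algebra_simps)
    have f1: "fact (m - p) = (real r - real p + 1) * (fact (r - p) :: real)"
      using pr unfolding r by (simp add: Suc_diff_le of_nat_diff)
    have f2: "fact (m - Suc p) = (fact (r - p) :: real)" using r by simp
    have f3: "fact (Suc p) = (real p + 1) * (fact p :: real)" by simp
    have "H (Suc p) = (-1)^(Suc p) * real (Suc p) / (fact (Suc p) * fact (m - Suc p) * pochhammer (\<gamma> + real (Suc p)) m)"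
      unfolding H_def using pm by (simp del: of_nat_Suc fact_Suc power_Suc)
    also have "\<dots> = (-((-1)^p)) * (real p + 1) / (((real p + 1) * fact p) * fact (r - p) * (P * (\<gamma> + real p + 1 + real r)))"
      unfolding e2 f2 f3 by (rule arg_cong2[where f="(/)"]) simp_all
    finally have HS: "H (Suc p) = (-((-1)^p)) * (real p + 1) / (((real p + 1) * fact p) * fact (r - p) * (P * (\<gamma> + real p + 1 + real r)))" .
    have Hp: "H p = (-1)^p * real p / (fact p * ((real r - real p + 1) * fact (r-p)) * ((\<gamma> + real p) * P))"
      unfolding H_def using pm by (simp add: e1 f1)
    have "real m = real r + 1" using r by simp
    then show ?thesis unfolding HS Hp e3 f1
      by (rule ssubst) (rule gen_id, use P0 assms pr in auto)
  qed
  have "(\<Sum>p=0..m. (-1)^p * (\<gamma> + 2 * real p) / (fact p * fact (m-p) * pochhammer (\<gamma> + real p) (m+1)))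
     = (\<Sum>p=0..m. - (H (Suc p) - H p) / real m)" by (rule sum.cong[OF refl], rule T, simp)
  also have "\<dots> = - (\<Sum>p=0..m. H (Suc p) - H p) / real m"
    by (simp add: sum_divide_distrib[symmetric] sum_negf[symmetric])
  also have "\<dots> = - (H (Suc m) - H 0) / real m" by (subst sum_Suc_diff) auto
  also have "\<dots> = 0" unfolding H_def by simp
  finally show ?thesis .
qed


lemma inner0:
  fixes \<gamma> :: real
  assumes "\<gamma> > 0"
  shows "(\<Sum>p=0..m. 1 / (fact p * fact (m-p) * pochhammer (1 - (\<gamma> + 2 * real p)) p * pochhammer (\<gamma> + 2 * real p + 1) (m-p)))
     = (if m = 0 then 1 else 0)"
proof (cases "m = 0")
  case True then show ?thesis by simp
next
  case False
  have "(\<Sum>p=0..m. 1 / (fact p * fact (m-p) * pochhammer (1 - (\<gamma> + 2 * real p)) p * pochhammer (\<gamma> + 2 * real p + 1) (m-p)))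
    = (\<Sum>p=0..m. (-1)^p * (\<gamma> + 2 * real p) / (fact p * fact (m-p) * pochhammer (\<gamma> + real p) (m+1)))"
    by (rule sum.cong[OF refl], rule summand_form, use assms in auto)
  also have "\<dots> = 0" using tele[OF assms, of m] False by simp
  finally show ?thesis using False by simp
qed

lemma keyL:
  fixes \<gamma> s :: real
  assumes "\<gamma> > 0"
  shows "(\<Sum>p=0..k. (-s)^p / (fact p * pochhammer (1 - (\<gamma> + 2 * real p)) p)
      * (laguerre (k-p) (\<gamma> + 2 * real p) s / pochhammer (\<gamma> + 2 * real p + 1) (k-p))) = 1 / fact k"
proof -
  define g where "g p l = (-s)^(p+l) / fact (k-(p+l)) * (1 / (fact p * fact l * pochhammer (1 - (\<gamma> + 2 * real p)) p * pochhammer (\<gamma> + 2 * real p + 1) l))" for p l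
  have "(\<Sum>p=0..k. (-s)^p / (fact p * pochhammer (1 - (\<gamma> + 2 * real p)) p)
      * (laguerre (k-p) (\<gamma> + 2 * real p) s / pochhammer (\<gamma> + 2 * real p + 1) (k-p)))
    = (\<Sum>p=0..k. \<Sum>l=0..k-p. g p l)"
  proof (rule sum.cong[OF refl])
    fix p assume "p \<in> {0..k}"
    have a: "\<gamma> + 2 * real p > 0" using assms by simp
    have "laguerre (k-p) (\<gamma> + 2 * real p) s / pochhammer (\<gamma> + 2 * real p + 1) (k-p)
      = (\<Sum>l=0..k-p. (-s)^l / (fact (k - p - l) * fact l * pochhammer (\<gamma> + 2 * real p + 1) l))"
      by (rule lag_expand[OF a])
    then show "(-s)^p / (fact p * pochhammer (1 - (\<gamma> + 2 * real p)) p)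
      * (laguerre (k-p) (\<gamma> + 2 * real p) s / pochhammer (\<gamma> + 2 * real p + 1) (k-p))
      = (\<Sum>l=0..k-p. g p l)"
      by (simp add: sum_distrib_left g_def power_add diff_diff_left mult_ac)
  qed
  also have "\<dots> = (\<Sum>m=0..k. \<Sum>p=0..m. g p (m-p))" by (rule tri)
  also have "\<dots> = (\<Sum>m=0..k. (-s)^m / fact (k-m) * (if m = 0 then 1 else 0))"
  proof (rule sum.cong[OF refl])
    fix m assume "m \<in> {0..k}"
    have "(\<Sum>p=0..m. g p (m-p)) = (\<Sum>p=0..m. (-s)^m / fact (k-m) * (1 / (fact p * fact (m-p) * pochhammer (1 - (\<gamma> + 2 * real p)) p * pochhammer (\<gamma> + 2 * real p + 1) (m-p))))"
      by (rule sum.cong[OF refl]) (simp add: g_def)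
    also have "\<dots> = (-s)^m / fact (k-m) * (if m = 0 then 1 else 0)"
      by (simp only: sum_distrib_left[symmetric] inner0[OF assms])
    finally show "(\<Sum>p=0..m. g p (m-p)) = (-s)^m / fact (k-m) * (if m = 0 then 1 else 0)" .
  qed
  also have "\<dots> = (\<Sum>m=0..k. (if m = 0 then (-s)^m / fact (k-m) else 0))"
    by (rule sum.cong) auto
  also have "\<dots> = 1 / fact k" by (simp add: sum.delta)
  finally show ?thesis .
qed


lemma nu_pos: "\<kappa> \<ge> 0 \<Longrightarrow> nu \<kappa> m > 0"
  unfolding nu_def by (intro mult_pos_pos pochhammer_pos) auto

theorem mainTheorem7:
  fixes \<kappa> \<omega> :: real and n :: nat and x y :: "real^3"
  assumes "\<kappa> \<ge> 0" and "\<omega> > 0" and "n \<ge> 2" and "y \<in> icos"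
  shows "w \<kappa> \<omega> n x y =
    (\<Sum>j = 0..n div 2. (- (tau + 2) / (4 * \<omega>)) ^ j
        / pochhammer (15 * \<kappa> + 3/2 + real (n - 2 * j)) j
        * (nu \<kappa> n / nu \<kappa> (n - 2 * j))
        * laguerre j (15 * \<kappa> + 1/2 + real (n - 2 * j)) (\<omega> * norm x ^ 2)
        * phi \<kappa> (n - 2 * j) x y)"
proof -
  define N where "N = n div 2"
  define c where "c = - (tau + 2) / (4 * \<omega>)"
  define s where "s = \<omega> * norm x ^ 2"
  define \<alpha> where "\<alpha> j = 15 * \<kappa> + 1/2 + real (n - 2 * j)" for j
  define a where "a k = q \<kappa> (n - 2 * k) x y / nu \<kappa> (n - 2 * k)" for k
  define L where "L j = laguerre j (\<alpha> j) s" for j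
  define F where "F j i = c ^ j * (L j / pochhammer (\<alpha> j + 1) j) * ((- c * s) ^ i / (fact i * pochhammer (1 - \<alpha> j) i)) * a (j + i)" for j i
  have nz: "nu \<kappa> m \<noteq> 0" for m using nu_pos[OF assms(1)] by (metis less_irrefl)
  have om: "\<omega> \<noteq> 0" using assms by simp
  have W: "w \<kappa> \<omega> n x y = (\<Sum>k=0..N. nu \<kappa> n * (c^k / fact k * a k))"
    unfolding w_def N_def
  proof (rule sum.cong[OF refl])
    fix k
    show "(-1) ^ k * (tau + 2) ^ k / ((4 * \<omega>) ^ k * fact k) * (nu \<kappa> n / nu \<kappa> (n - 2 * k)) * q \<kappa> (n - 2 * k) x y
      = nu \<kappa> n * (c^k / fact k * a k)"
    proof -
      have cp: "c^k = (-1)^k * (tau + 2)^k / (4 * \<omega>)^k" unfolding c_def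
        by (simp only: power_divide power_minus[of "tau + 2" k] minus_divide_left)
      show ?thesis unfolding cp a_def by (simp add: divide_inverse inverse_mult_distrib mult_ac)
    qed
  qed
  have PHI: "phi \<kappa> (n - 2 * j) x y = nu \<kappa> (n - 2 * j) * (\<Sum>i=0..N-j. (- c * s) ^ i / (fact i * pochhammer (1 - \<alpha> j) i) * a (j+i))"
    if "j \<le> N" for j
  proof -
    have d: "(n - 2 * j) div 2 = N - j" unfolding N_def by (simp add: div_mult_self1 diff_mult_distrib)
    have "phi \<kappa> (n - 2 * j) x y = (\<Sum>i=0..N-j. nu \<kappa> (n - 2 * j) * ((- c * s) ^ i / (fact i * pochhammer (1 - \<alpha> j) i) * a (j+i)))"
      unfolding phi_def d
    proof (rule sum.cong[OF refl])
      fix i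
      have e1: "n - 2 * j - 2 * i = n - 2 * (j + i)" by simp
      have e2: "- 15 * \<kappa> - real (n - 2 * j) + 1/2 = 1 - \<alpha> j" unfolding \<alpha>_def by simp
      have e3: "(- c * s) ^ i = (tau + 2)^i * (norm x ^ 2)^i / 4^i"
      proof -
        have "- c * s = (tau + 2) * norm x ^ 2 / 4" unfolding c_def s_def using om by (simp add: field_simps)
        then have "(- c * s) ^ i = ((tau + 2) * norm x ^ 2 / 4) ^ i" by (rule arg_cong)
        then show ?thesis by (simp only: power_divide power_mult_distrib)
      qed
      show "(tau + 2) ^ i * (norm x ^ 2) ^ i / (4 ^ i * fact i * pochhammer (- 15 * \<kappa> - real (n - 2 * j) + 1 / 2) i) *
         (nu \<kappa> (n - 2 * j) / nu \<kappa> (n - 2 * j - 2 * i)) * q \<kappa> (n - 2 * j - 2 * i) x y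
         = nu \<kappa> (n - 2 * j) * ((- c * s) ^ i / (fact i * pochhammer (1 - \<alpha> j) i) * a (j+i))"
        unfolding e1 e2 e3 a_def by (simp add: divide_inverse inverse_mult_distrib mult_ac)
    qed
    then show ?thesis by (simp add: sum_distrib_left)
  qed
  have R1: "(\<Sum>j = 0..n div 2. (- (tau + 2) / (4 * \<omega>)) ^ j
        / pochhammer (15 * \<kappa> + 3/2 + real (n - 2 * j)) j
        * (nu \<kappa> n / nu \<kappa> (n - 2 * j))
        * laguerre j (15 * \<kappa> + 1/2 + real (n - 2 * j)) (\<omega> * norm x ^ 2)
        * phi \<kappa> (n - 2 * j) x y) = (\<Sum>j=0..N. \<Sum>i=0..N-j. nu \<kappa> n * F j i)"
    unfolding N_def[symmetric]
  proof (rule sum.cong[OF refl])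
    fix j assume "j \<in> {0..N}"
    then have jN: "j \<le> N" by simp
    have b1: "15 * \<kappa> + 3/2 + real (n - 2 * j) = \<alpha> j + 1" unfolding \<alpha>_def by simp
    have b2: "laguerre j (15 * \<kappa> + 1/2 + real (n - 2 * j)) (\<omega> * norm x ^ 2) = L j"
      unfolding L_def \<alpha>_def s_def ..
    define S where "S = (\<Sum>i=0..N-j. (- c * s) ^ i / (fact i * pochhammer (1 - \<alpha> j) i) * a (j+i))"
    have "c ^ j / pochhammer (\<alpha> j + 1) j * (nu \<kappa> n / nu \<kappa> (n - 2 * j)) * L j * (nu \<kappa> (n - 2 * j) * S)
        = nu \<kappa> n * (c ^ j * (L j / pochhammer (\<alpha> j + 1) j) * S)"
      using nz[of "n - 2 * j"] by (simp add: field_simps)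
    also have "\<dots> = (\<Sum>i=0..N-j. nu \<kappa> n * F j i)"
      unfolding S_def F_def by (simp add: sum_distrib_left mult_ac)
    finally show "(- (tau + 2) / (4 * \<omega>)) ^ j
        / pochhammer (15 * \<kappa> + 3/2 + real (n - 2 * j)) j
        * (nu \<kappa> n / nu \<kappa> (n - 2 * j))
        * laguerre j (15 * \<kappa> + 1/2 + real (n - 2 * j)) (\<omega> * norm x ^ 2)
        * phi \<kappa> (n - 2 * j) x y = (\<Sum>i=0..N-j. nu \<kappa> n * F j i)"
      unfolding b1 b2 PHI[OF jN] c_def[symmetric] S_def .
  qed
  also have "\<dots> = (\<Sum>k=0..N. \<Sum>j=0..k. nu \<kappa> n * F j (k - j))" by (rule tri)
  also have "\<dots> = (\<Sum>k=0..N. nu \<kappa> n * (c^k / fact k * a k))"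
  proof (rule sum.cong[OF refl])
    fix k assume "k \<in> {0..N}"
    then have kN: "k \<le> N" by simp
    define G where "G j = (-s)^(k-j) / (fact (k-j) * pochhammer (1 - \<alpha> j) (k-j)) * (L j / pochhammer (\<alpha> j + 1) j)" for j
    have FG: "F j (k - j) = c^k * a k * G j" if "j \<le> k" for j
    proof -
      have cp: "c^j * (- c * s) ^ (k-j) = c^k * (-s)^(k-j)"
      proof -
        have "c^j * (- c * s) ^ (k-j) = c^j * c^(k-j) * (-s)^(k-j)" by (simp add: power_mult_distrib[symmetric])
        also have "c^j * c^(k-j) = c^k" using that by (simp add: power_add[symmetric])
        finally show ?thesis .
      qed
      have jk: "j + (k - j) = k" using that by simp
      show ?thesis unfolding F_def G_def jk using cp
        by (simp add: divide_inverse mult_ac)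
    qed
    define \<gamma> where "\<gamma> = 15 * \<kappa> + 1/2 + real n - 2 * real k"
    have gpos: "\<gamma> > 0" unfolding \<gamma>_def using kN assms(1) unfolding N_def by linarith
    have "(\<Sum>j=0..k. G j) = (\<Sum>p=0..k. G (k - p))"
      using sum.atLeastAtMost_rev[of G 0 k] by simp
    also have "\<dots> = (\<Sum>p=0..k. (-s)^p / (fact p * pochhammer (1 - (\<gamma> + 2 * real p)) p)
      * (laguerre (k-p) (\<gamma> + 2 * real p) s / pochhammer (\<gamma> + 2 * real p + 1) (k-p)))"
    proof (rule sum.cong[OF refl])
      fix p assume "p \<in> {0..k}"
      then have pk: "p \<le> k" by simp
      have al: "\<alpha> (k - p) = \<gamma> + 2 * real p"
        unfolding \<alpha>_def \<gamma>_def using pk kN unfolding N_def by (simp add: of_nat_diff)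
      have kk: "k - (k - p) = p" using pk by simp
      show "G (k - p) = (-s)^p / (fact p * pochhammer (1 - (\<gamma> + 2 * real p)) p)
      * (laguerre (k-p) (\<gamma> + 2 * real p) s / pochhammer (\<gamma> + 2 * real p + 1) (k-p))"
        unfolding G_def L_def kk al ..
    qed
    also have "\<dots> = 1 / fact k" by (rule keyL[OF gpos])
    finally have GS: "(\<Sum>j=0..k. G j) = 1 / fact k" .
    have "(\<Sum>j=0..k. nu \<kappa> n * F j (k - j)) = (\<Sum>j=0..k. nu \<kappa> n * (c^k * a k) * G j)"
      by (rule sum.cong[OF refl]) (simp add: FG mult_ac)
    also have "\<dots> = nu \<kappa> n * (c^k * a k) * (1 / fact k)" by (simp add: sum_distrib_left[symmetric] GS)
    finally show "(\<Sum>j=0..k. nu \<kappa> n * F j (k - j)) = nu \<kappa> n * (c^k / fact k * a k)" by simp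
  qed
  finally show ?thesis using W by simp
qed

end
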